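(* Let $\mathcal O$ be the suboperad of $\mathrm{CNCB}$ generated by $a:=T_{bbb}$ and $w:=T_{bub}$. Then $\mathcal O$ admits the presentation with generators $a,w$ of arity $2$ and relations $$w\circ_1 w=w\circ_2 w,\qquad a\circ_1 w=a\circ_2 w.$$ That is, $\mathcal O$ is isomorphic, via the morphism sending the generators to $a$ and $w$, to the quotient of the free operad on two binary generators by the operadic congruence generated by these relations.
   Context: For $n\ge2$, a bicoloured noncrossing configuration (BNC) of size $n$ is a regular polygon with vertices $1,\dots,n+1$ clockwise, together with disjoint sets of blue and red arcs among the arcs $(i,j)$, $1\le i<j\le n+1$. The arcs $(i,i+1)$ are the edges ($i$th edge), $(1,n+1)$ is the base, and the others are diagonals. Coloured arcs are pairwise noncrossing ($(i,j),(k,l)$ cross iff $i<k<j<l$ or $k<i<l<j$), and red arcs are diagonals. There is one BNC of size $1$, a blue segment, which is the unit. The operad $\mathrm{CNCB}$ has the BNCs as elements (arity = size). Its composition $\mathfrak C\circ_i\mathfrak D$ ($\mathfrak C$ of size $n$, $\mathfrak D$ of size $m$) glues the base of $\mathfrak D$ on the $i$th edge of $\mathfrak C$. Arcs $(a,b)$ of $\mathfrak C$ become $(\sigma(a),\sigma(b))$ with $\sigma(v)=v$ for $v\le i$ and $v+m-1$ otherwise, and arcs $(a,b)$ of $\mathfrak D$ become $(a+i-1,b+i-1)$, keeping colours. The exception is the arc $(i,i+m)$, which is red if the $i$th edge of $\mathfrak C$ and the base of $\mathfrak D$ are both uncoloured, blue if both are blue, and uncoloured otherwise. For $x,y,z\in\{b,u\}$,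 $T_{xyz}$ denotes the BNC of size $2$ (a triangle with vertices $1,2,3$) whose first edge $(1,2)$ has colour $x$, whose base $(1,3)$ has colour $y$, and whose second edge $(2,3)$ has colour $z$, where $b$ = blue and $u$ = uncoloured. The suboperad generated by a set is the smallest suboperad containing it. *)

theory Defs
  imports Main
begin

text \<open>A BNC of size n: polygon with vertices 1..n+1; arcs are pairs (i,j) with i<j.
  We record the size, the set of blue arcs and the set of red arcs.\<close>

datatype bnc = BNC (bnc_size: nat) (bnc_blue: "(nat \<times> nat) set") (bnc_red: "(nat \<times> nat) set")

definition is_arc :: "nat \<Rightarrow> nat \<times> nat \<Rightarrow> bool" where
  "is_arc n e \<longleftrightarrow> 1 \<le> fst e \<and> fst e < snd e \<and> snd e \<le> n + 1"

definition is_diagonal :: "nat \<Rightarrow> nat \<times> nat \<Rightarrow> bool" where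
  "is_diagonal n e \<longleftrightarrow> is_arc n e \<and> snd e \<noteq> fst e + 1 \<and> e \<noteq> (1, n + 1)"

definition crosses :: "nat \<times> nat \<Rightarrow> nat \<times> nat \<Rightarrow> bool" where
  "crosses e f \<longleftrightarrow> (case e of (i, j) \<Rightarrow> case f of (k, l) \<Rightarrow>
      (i < k \<and> k < j \<and> j < l) \<or> (k < i \<and> i < l \<and> l < j))"

text \<open>Being an element of CNCB (for documentation; the unit is the unique BNC of size 1).\<close>
definition is_bnc :: "bnc \<Rightarrow> bool" where
  "is_bnc C \<longleftrightarrow>
     (bnc_size C = 1 \<and> bnc_blue C = {(1, 2)} \<and> bnc_red C = {}) \<or>
     (bnc_size C \<ge> 2 \<and>
      (\<forall>e \<in> bnc_blue C. is_arc (bnc_size C) e) \<and>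
      (\<forall>e \<in> bnc_red C. is_diagonal (bnc_size C) e) \<and>
      bnc_blue C \<inter> bnc_red C = {} \<and>
      (\<forall>e \<in> bnc_blue C \<union> bnc_red C. \<forall>f \<in> bnc_blue C \<union> bnc_red C. \<not> crosses e f))"

definition bnc_unit :: bnc where
  "bnc_unit = BNC 1 {(1, 2)} {}"

text \<open>Partial composition C \<circ>_i D: glue the base of D on the i-th edge of C.\<close>
definition bnc_comp :: "bnc \<Rightarrow> nat \<Rightarrow> bnc \<Rightarrow> bnc" where
  "bnc_comp C i D =
    (let n = bnc_size C; m = bnc_size D;
         \<sigma> = (\<lambda>v. if v \<le> i then v else v + m - 1);
         mC = (\<lambda>A. (\<lambda>(a, b). (\<sigma> a, \<sigma> b)) ` A);
         mD = (\<lambda>A. (\<lambda>(a, b). (a + i - 1, b + i - 1)) ` A);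
         e = (i, i + m);
         edge_blue = ((i, i + 1) \<in> bnc_blue C);
         edge_unc = ((i, i + 1) \<notin> bnc_blue C \<and> (i, i + 1) \<notin> bnc_red C);
         base_blue = ((1, m + 1) \<in> bnc_blue D);
         base_unc = ((1, m + 1) \<notin> bnc_blue D \<and> (1, m + 1) \<notin> bnc_red D)
     in BNC (n + m - 1)
          (((mC (bnc_blue C) \<union> mD (bnc_blue D)) - {e}) \<union>
             (if edge_blue \<and> base_blue then {e} else {}))
          (((mC (bnc_red C) \<union> mD (bnc_red D)) - {e}) \<union>
             (if edge_unc \<and> base_unc then {e} else {})))"

text \<open>T_xyz: first edge (1,2) colour x, base (1,3) colour y, second edge (2,3) colour z.\<close>
definition T_bbb :: bnc where "T_bbb = BNC 2 {(1, 2), (1, 3), (2, 3)} {}"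
definition T_bub :: bnc where "T_bub = BNC 2 {(1, 2), (2, 3)} {}"

inductive_set gen_suboperad :: "bnc set \<Rightarrow> bnc set" for G :: "bnc set" where
  unit: "bnc_unit \<in> gen_suboperad G"
| gen: "g \<in> G \<Longrightarrow> g \<in> gen_suboperad G"
| comp: "x \<in> gen_suboperad G \<Longrightarrow> y \<in> gen_suboperad G \<Longrightarrow> 1 \<le> i \<Longrightarrow> i \<le> bnc_size x
          \<Longrightarrow> bnc_comp x i y \<in> gen_suboperad G"

datatype gname = GA | GW

datatype ftree = Leaf | Node gname ftree ftree

fun arity :: "ftree \<Rightarrow> nat" where
  "arity Leaf = 1"
| "arity (Node g l r) = arity l + arity r"

fun graft :: "ftree \<Rightarrow> nat \<Rightarrow> ftree \<Rightarrow> ftree" where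
  "graft Leaf i s = s"
| "graft (Node g l r) i s =
     (if i \<le> arity l then Node g (graft l i s) r else Node g l (graft r (i - arity l) s))"

abbreviation fgen :: "gname \<Rightarrow> ftree" where
  "fgen g \<equiv> Node g Leaf Leaf"

inductive ocong :: "ftree \<Rightarrow> ftree \<Rightarrow> bool" where
  rel_w: "ocong (graft (fgen GW) 1 (fgen GW)) (graft (fgen GW) 2 (fgen GW))"
| rel_a: "ocong (graft (fgen GA) 1 (fgen GW)) (graft (fgen GA) 2 (fgen GW))"
| refl: "ocong t t"
| sym: "ocong t s \<Longrightarrow> ocong s t"
| trans: "ocong t s \<Longrightarrow> ocong s u \<Longrightarrow> ocong t u"
| comp_right: "ocong t t' \<Longrightarrow> 1 \<le> i \<Longrightarrow> i \<le> arity s \<Longrightarrow> ocong (graft s i t) (graft s i t')"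
| comp_left: "ocong t t' \<Longrightarrow> 1 \<le> i \<Longrightarrow> i \<le> arity t \<Longrightarrow> ocong (graft t i s) (graft t' i s)"

fun gen_val :: "gname \<Rightarrow> bnc" where
  "gen_val GA = T_bbb"
| "gen_val GW = T_bub"

fun eval :: "ftree \<Rightarrow> bnc" where
  "eval Leaf = bnc_unit"
| "eval (Node g l r) = bnc_comp (bnc_comp (gen_val g) 2 (eval r)) 1 (eval l)"

end

theory Submission
  imports Defs
begin


definition edges :: "nat \<Rightarrow> (nat \<times> nat) set" where
  "edges n = {(k, k+1) | k. 1 \<le> k \<and> k \<le> n}"
definition sg :: "nat \<Rightarrow> nat \<Rightarrow> nat \<Rightarrow> nat" where
  "sg i m v = (if v \<le> i then v else v + m - 1)"
definition mC :: "nat \<Rightarrow> nat \<Rightarrow> (nat \<times> nat) set \<Rightarrow> (nat \<times> nat) set" where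
  "mC i m A = (\<lambda>(a, b). (sg i m a, sg i m b)) ` A"
definition mD :: "nat \<Rightarrow> (nat \<times> nat) set \<Rightarrow> (nat \<times> nat) set" where
  "mD i A = (\<lambda>(a, b). (a + i - 1, b + i - 1)) ` A"
definition long :: "(nat \<times> nat) set \<Rightarrow> bool" where
  "long A \<longleftrightarrow> (\<forall>(a,b)\<in>A. a + 2 \<le> b)"

lemma mC_edges:
  assumes "1 \<le> i" "i \<le> n" "1 \<le> m"
  shows "mC i m (edges n) = {(k,k+1)|k. 1\<le>k \<and> k<i} \<union> {(i,i+m)} \<union> {(k,k+1)|k. i+m \<le> k \<and> k \<le> n+m-1}"
proof (rule set_eqI, rule iffI)
  fix x assume "x \<in> mC i m (edges n)"
  then obtain k where "1 \<le> k" "k \<le> n" "x = (sg i m k, sg i m (k+1))" unfolding mC_def edges_def by auto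
  then show "x \<in> {(k,k+1)|k. 1\<le>k \<and> k<i} \<union> {(i,i+m)} \<union> {(k,k+1)|k. i+m \<le> k \<and> k \<le> n+m-1}"
    using assms unfolding sg_def by (cases "k < i"; cases "k = i"; auto)
next
  fix x assume x: "x \<in> {(k,k+1)|k. 1\<le>k \<and> k<i} \<union> {(i,i+m)} \<union> {(k,k+1)|k. i+m \<le> k \<and> k \<le> n+m-1}"
  have im: "(\<lambda>(a, b). (sg i m a, sg i m b)) (k, k+1) \<in> mC i m (edges n)" if "1 \<le> k" "k \<le> n" for k
    using that unfolding mC_def edges_def by blast
  from x consider (a) k where "1\<le>k" "k<i" "x = (k,k+1)" | (b) "x = (i,i+m)"
    | (c) k where "i+m \<le> k" "k \<le> n+m-1" "x = (k,k+1)" by blast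
  then show "x \<in> mC i m (edges n)"
  proof cases
    case (a k) then show ?thesis using im[of k] assms by (simp add: sg_def)
  next
    case b then show ?thesis using im[of i] assms by (simp add: sg_def)
  next
    case (c k)
    then have "i < k+1-m" "k+1-m \<le> n" "k+1-m+m-1 = k" "k+1-m+1+m-1 = k+1" "1 \<le> k+1-m" using assms by auto
    then have s1: "sg i m (k+1-m) = k" "sg i m (k+1-m+1) = k+1" unfolding sg_def by auto
    have "(sg i m (k+1-m), sg i m (k+1-m+1)) \<in> mC i m (edges n)" using im[of "k+1-m"] \<open>k+1-m \<le> n\<close> \<open>1 \<le> k+1-m\<close> by simp
    then show ?thesis unfolding s1 using c by simp
  qed
qed

lemma mD_edges:
  assumes "1 \<le> i" "1 \<le> m"
  shows "mD i (edges m) = {(k,k+1)|k. i \<le> k \<and> k \<le> i+m-1}"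
proof (rule set_eqI, rule iffI)
  fix x assume "x \<in> mD i (edges m)"
  then obtain k where k: "1 \<le> k" "k \<le> m" "x = (k+i-1, k+1+i-1)" unfolding mD_def edges_def by auto
  then have "x = (k+i-1, (k+i-1)+1)" "i \<le> k+i-1" "k+i-1 \<le> i+m-1" using assms by auto
  then show "x \<in> {(k,k+1)|k. i \<le> k \<and> k \<le> i+m-1}" by blast
next
  fix x assume "x \<in> {(k,k+1)|k. i \<le> k \<and> k \<le> i+m-1}"
  then obtain k where k: "i \<le> k" "k \<le> i+m-1" "x = (k,k+1)" by blast
  have e: "(k+1-i, (k+1-i)+1) \<in> edges m" using k assms unfolding edges_def by auto
  have "(\<lambda>(a, b). (a + i - 1, b + i - 1)) (k+1-i, (k+1-i)+1) \<in> mD i (edges m)"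
    unfolding mD_def using e by (rule imageI)
  moreover have "(\<lambda>(a, b). (a + i - 1, b + i - 1)) (k+1-i, (k+1-i)+1) = x" using k assms by auto
  ultimately show "x \<in> mD i (edges m)" by simp
qed


lemma setlem1: "e \<in> X \<Longrightarrow> ((X \<union> {e} \<union> C \<union> D) - {e}) \<union> {e} = X \<union> C \<union> D" by blast
lemma setlem2: "e \<notin> X \<Longrightarrow> e \<notin> C \<Longrightarrow> e \<in> D \<Longrightarrow> ((X \<union> {e} \<union> C \<union> D) - {e}) \<union> {e} = X \<union> C \<union> D" by blast
lemma setlem3: "e \<notin> X \<Longrightarrow> e \<notin> C \<Longrightarrow> e \<notin> D \<Longrightarrow> ((X \<union> {e} \<union> C \<union> D) - {e}) \<union> {} = X \<union> C \<union> D" by blast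

lemma comp_rep:
  assumes i: "1 \<le> i" "i \<le> n" and m: "1 \<le> m" and A: "long A" and B: "long B"
  shows "bnc_comp (BNC n (edges n \<union> A) {}) i (BNC m (edges m \<union> B) {})
       = BNC (n+m-1) (edges (n+m-1) \<union> mC i m A \<union> mD i B) {}"
proof -
  have ei: "(i, i+1) \<in> edges n" using i unfolding edges_def by auto
  have eC: "(i, i+m) \<notin> mC i m A"
  proof
    assume "(i, i+m) \<in> mC i m A"
    then obtain a b where ab: "(a,b) \<in> A" "sg i m a = i" "sg i m b = i + m" unfolding mC_def by auto
    have "a + 2 \<le> b" using A ab(1) unfolding long_def by auto
    then show False using ab m unfolding sg_def by (auto split: if_splits)
  qed
  have eD: "(i, i+m) \<in> mD i B \<longleftrightarrow> (1, m+1) \<in> B"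
  proof
    assume "(i, i+m) \<in> mD i B"
    then obtain a b where ab: "(a,b) \<in> B" "a + i - 1 = i" "b + i - 1 = i + m" unfolding mD_def by auto
    then have "a = 1" "b = m+1" using i by auto
    then show "(1, m+1) \<in> B" using ab by simp
  next
    assume "(1, m+1) \<in> B" then show "(i, i+m) \<in> mD i B" unfolding mD_def using i by force
  qed
  have bb: "(1, m+1) \<in> edges m \<union> B \<longleftrightarrow> m = 1 \<or> (1, m+1) \<in> B"
    unfolding edges_def using m by auto
  have eB: "(1, m+1) \<in> B \<Longrightarrow> m \<noteq> 1" using B unfolding long_def by auto
  have ee: "(i, i+m) \<in> edges (n+m-1) \<longleftrightarrow> m = 1" unfolding edges_def using i m by auto
  have E: "mC i m (edges n) \<union> mD i (edges m) = edges (n+m-1) \<union> {(i,i+m)}"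
    unfolding mC_edges[OF i m] mD_edges[OF i(1) m]
  proof (rule set_eqI, rule iffI)
    fix x assume "x \<in> {(k,k+1)|k. 1\<le>k \<and> k<i} \<union> {(i,i+m)} \<union> {(k,k+1)|k. i+m \<le> k \<and> k \<le> n+m-1} \<union>
       {(k,k+1)|k. i \<le> k \<and> k \<le> i+m-1}"
    then show "x \<in> edges (n+m-1) \<union> {(i,i+m)}" unfolding edges_def using i m by auto
  next
    fix x assume "x \<in> edges (n+m-1) \<union> {(i,i+m)}"
    then consider "x = (i,i+m)" | k where "1 \<le> k" "k \<le> n+m-1" "x = (k,k+1)" unfolding edges_def by blast
    then show "x \<in> {(k,k+1)|k. 1\<le>k \<and> k<i} \<union> {(i,i+m)} \<union> {(k,k+1)|k. i+m \<le> k \<and> k \<le> n+m-1} \<union>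
       {(k,k+1)|k. i \<le> k \<and> k \<le> i+m-1}"
    proof cases
      case 1 then show ?thesis by blast
    next
      case (2 k)
      have c3: "k < i \<or> (i \<le> k \<and> k \<le> i+m-1) \<or> (i+m \<le> k)" using m by linarith
      show ?thesis
      proof -
        { assume "k < i" then have "x \<in> {(k,k+1)|k. 1\<le>k \<and> k<i}" using 2 by blast }
        moreover { assume "i \<le> k \<and> k \<le> i+m-1" then have "x \<in> {(k,k+1)|k. i \<le> k \<and> k \<le> i+m-1}" using 2 by blast }
        moreover { assume "i+m \<le> k" then have "x \<in> {(k,k+1)|k. i+m \<le> k \<and> k \<le> n+m-1}" using 2 by blast }
        ultimately show ?thesis using c3 by blast
      qed
    qed
  qed
  have U: "mC i m (X \<union> Y) = mC i m X \<union> mC i m Y" "mD i (X \<union> Y) = mD i X \<union> mD i Y" for X Y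
    unfolding mC_def mD_def by auto
  have 1: "bnc_comp (BNC n (edges n \<union> A) {}) i (BNC m (edges m \<union> B) {}) = BNC (n+m-1)
     (((mC i m (edges n \<union> A) \<union> mD i (edges m \<union> B)) - {(i,i+m)}) \<union> (if (1,m+1) \<in> edges m \<union> B then {(i,i+m)} else {})) {}"
  proof -
    have f1: "(\<lambda>(a, b). (if a \<le> i then a else a + m - 1, if b \<le> i then b else b + m - 1)) ` X = mC i m X" for X
      unfolding mC_def sg_def by simp
    have f2: "(\<lambda>(a, b). (a + i - 1, b + i - 1)) ` X = mD i X" for X
      unfolding mD_def by simp
    have f3: "((i, i + 1) \<in> edges n \<union> A) = True" using ei by simp
    have f4: "mC i m {} = {}" "mD i {} = {}" unfolding mC_def mD_def by auto
    show ?thesis unfolding bnc_comp_def Let_def bnc.sel f1 f2 f3 f4 by simp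
  qed
  have 2: "((mC i m (edges n \<union> A) \<union> mD i (edges m \<union> B)) - {(i,i+m)}) \<union> (if (1,m+1) \<in> edges m \<union> B then {(i,i+m)} else {})
     = edges (n+m-1) \<union> mC i m A \<union> mD i B"
  proof -
    have "mC i m (edges n \<union> A) \<union> mD i (edges m \<union> B) = (mC i m (edges n) \<union> mD i (edges m)) \<union> mC i m A \<union> mD i B"
      by (simp only: U Un_ac)
    also have "\<dots> = edges (n+m-1) \<union> {(i,i+m)} \<union> mC i m A \<union> mD i B" by (simp only: E)
    finally have EE: "mC i m (edges n \<union> A) \<union> mD i (edges m \<union> B) = edges (n+m-1) \<union> {(i,i+m)} \<union> mC i m A \<union> mD i B" .
    show ?thesis
    proof (cases "m = 1")
      case True
      then have "(1,m+1) \<in> edges m \<union> B" "(i,i+m) \<in> edges (n+m-1)" using bb ee by auto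
      then have "(if (1,m+1) \<in> edges m \<union> B then {(i,i+m)} else {}) = {(i,i+m)}" by simp
      then show ?thesis unfolding EE using setlem1[OF \<open>(i,i+m) \<in> edges (n+m-1)\<close>] by (simp only:)
    next
      case False
      then have nx: "(i,i+m) \<notin> edges (n+m-1)" using ee by simp
      have bd: "(1,m+1) \<in> edges m \<union> B \<longleftrightarrow> (i,i+m) \<in> mD i B" using bb eD False by simp
      show ?thesis
      proof (cases "(i,i+m) \<in> mD i B")
        case True
        then have "(if (1,m+1) \<in> edges m \<union> B then {(i,i+m)} else {}) = {(i,i+m)}" using bd by simp
        then show ?thesis unfolding EE using setlem2[OF nx eC True] by (simp only:)
      next
        case F: False
        then have "(if (1,m+1) \<in> edges m \<union> B then {(i,i+m)} else {}) = {}" using bd by simp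
        then show ?thesis unfolding EE using setlem3[OF nx eC F] by (simp only:)
      qed
    qed
  qed
  show ?thesis using 1 2 by simp
qed


definition shift :: "nat \<Rightarrow> (nat \<times> nat) set \<Rightarrow> (nat \<times> nat) set" where
  "shift k A = (\<lambda>(a, b). (a + k, b + k)) ` A"

fun S :: "ftree \<Rightarrow> (nat \<times> nat) set" where
  "S Leaf = {}"
| "S (Node g l r) = (if g = GA then {(1, arity l + arity r + 1)} else {}) \<union> S l \<union> shift (arity l) (S r)"

definition R :: "ftree \<Rightarrow> bnc" where
  "R t = BNC (arity t) (edges (arity t) \<union> S t) {}"

lemma shift_empty[simp]: "shift k {} = {}" unfolding shift_def by simp

lemma arity_pos: "1 \<le> arity t"
  by (induction t) auto

lemma S_bounds: "(a, b) \<in> S t \<Longrightarrow> 1 \<le> a \<and> a + 2 \<le> b \<and> b \<le> arity t + 1"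
proof (induction t arbitrary: a b)
  case Leaf then show ?case by simp
next
  case (Node g l r)
  have pl: "1 \<le> arity l" "1 \<le> arity r" by (rule arity_pos)+
  from Node.prems consider "g = GA" "(a,b) = (1, arity l + arity r + 1)" | "(a,b) \<in> S l"
    | a' b' where "(a',b') \<in> S r" "a = a' + arity l" "b = b' + arity l"
    using Node.prems by (auto simp: shift_def split: if_splits)
  then show ?case
  proof cases
    case 1 then show ?thesis using pl by auto
  next
    case 2 then show ?thesis using Node.IH(1)[of a b] by auto
  next
    case (3 a' b') then show ?thesis using Node.IH(2)[of a' b'] by auto
  qed
qed

lemma long_S: "long (S t)"
  unfolding long_def using S_bounds by blast

lemma arity_graft: "1 \<le> i \<Longrightarrow> i \<le> arity t \<Longrightarrow> arity (graft t i s) = arity t + arity s - 1"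
proof (induction t arbitrary: i)
  case Leaf then show ?case by simp
next
  case (Node g l r)
  have "1 \<le> arity s" "1 \<le> arity l" "1 \<le> arity r" by (rule arity_pos)+
  then show ?case using Node by auto
qed

lemma mC_empty[simp]: "mC i m {} = {}" unfolding mC_def by simp
lemma mD_1: "mD 1 X = X" "mD (Suc 0) X = X" unfolding mD_def by simp_all
lemma mC_Un: "mC i m (X \<union> Y) = mC i m X \<union> mC i m Y" unfolding mC_def by auto
lemma mC_sing: "mC i m {(a,b)} = {(sg i m a, sg i m b)}" unfolding mC_def by simp

lemma mC_shift_hi:
  assumes "i \<le> k" "\<forall>(a,b)\<in>X. 1 \<le> a \<and> 1 \<le> b" "1 \<le> m"
  shows "mC i m (shift k X) = shift (k + m - 1) X"
proof -
  have "mC i m (shift k X) = (\<lambda>x. (\<lambda>(a, b). (sg i m a, sg i m b)) ((\<lambda>(a, b). (a + k, b + k)) x)) ` X"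
    unfolding mC_def shift_def image_image by simp
  also have "\<dots> = (\<lambda>(a, b). (a + (k + m - 1), b + (k + m - 1))) ` X"
  proof (rule image_cong[OF HOL.refl])
    fix x assume "x \<in> X"
    then obtain a b where x: "x = (a,b)" "(a,b) \<in> X" by (cases x) auto
    then have "1 \<le> a" "1 \<le> b" using assms(2) by auto
    then show "(\<lambda>x. (\<lambda>(a, b). (sg i m a, sg i m b)) ((\<lambda>(a, b). (a + k, b + k)) x)) x =
        (\<lambda>(a, b). (a + (k + m - 1), b + (k + m - 1))) x"
      using assms(1,3) x(1) unfolding sg_def by auto
  qed
  finally show ?thesis unfolding shift_def .
qed

lemma mC_low:
  assumes "\<forall>(a,b)\<in>X. b \<le> i \<and> a \<le> b"
  shows "mC i m X = X"
proof -
  have "mC i m X = (\<lambda>x. x) ` X"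
    unfolding mC_def
  proof (rule image_cong[OF HOL.refl])
    fix x assume "x \<in> X"
    then obtain a b where x: "x = (a,b)" "(a,b) \<in> X" by (cases x) auto
    then show "(\<lambda>(a, b). (sg i m a, sg i m b)) x = x" using assms unfolding sg_def by auto
  qed
  then show ?thesis by simp
qed

lemma mC_shift_lo:
  assumes "k < i" "1 \<le> m"
  shows "mC i m (shift k X) = shift k (mC (i - k) m X)"
proof -
  have "mC i m (shift k X) = (\<lambda>x. (\<lambda>(a, b). (sg i m a, sg i m b)) ((\<lambda>(a, b). (a + k, b + k)) x)) ` X"
    unfolding mC_def shift_def image_image by simp
  also have "\<dots> = (\<lambda>x. (\<lambda>(a, b). (a + k, b + k)) ((\<lambda>(a, b). (sg (i-k) m a, sg (i-k) m b)) x)) ` X"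
  proof (rule image_cong[OF HOL.refl])
    fix x assume "x \<in> X"
    obtain a b where x: "x = (a,b)" by (cases x) auto
    show "(\<lambda>x. (\<lambda>(a, b). (sg i m a, sg i m b)) ((\<lambda>(a, b). (a + k, b + k)) x)) x =
        (\<lambda>x. (\<lambda>(a, b). (a + k, b + k)) ((\<lambda>(a, b). (sg (i-k) m a, sg (i-k) m b)) x)) x"
      using assms x unfolding sg_def by auto
  qed
  finally show ?thesis unfolding shift_def mC_def image_image by simp
qed

lemma shift_mD:
  assumes "k < i"
  shows "shift k (mD (i - k) X) = mD i X"
  unfolding shift_def mD_def image_image
  by (rule image_cong[OF HOL.refl]) (use assms in auto)

lemma S_graft: "1 \<le> i \<Longrightarrow> i \<le> arity t \<Longrightarrow> S (graft t i s) = mC i (arity s) (S t) \<union> mD i (S s)"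
proof (induction t arbitrary: i)
  case Leaf then show ?case by (simp add: mD_1)
next
  case (Node g l r)
  have ps: "1 \<le> arity s" "1 \<le> arity l" "1 \<le> arity r" by (rule arity_pos)+
  let ?m = "arity s"
  have root: "mC i ?m (if g = GA then {(1, arity l + arity r + 1)} else {})
      = (if g = GA then {(1, arity l + arity r + 1 + ?m - 1)} else {})"
    using Node.prems ps by (cases g) (auto simp: mC_sing sg_def)
  show ?case
  proof (cases "i \<le> arity l")
    case True
    have ag: "arity (graft l i s) = arity l + ?m - 1" using arity_graft[OF Node.prems(1) True] .
    have sh: "mC i ?m (shift (arity l) (S r)) = shift (arity l + ?m - 1) (S r)"
      by (rule mC_shift_hi) (use True S_bounds ps in fastforce)+
    show ?thesis using True Node.IH(1)[OF Node.prems(1) True] ag sh root ps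
      by (auto simp: mC_Un)
  next
    case False
    let ?k = "arity l"
    have i2: "1 \<le> i - ?k" "i - ?k \<le> arity r" using False Node.prems by auto
    have lo: "mC i ?m (S l) = S l"
      by (rule mC_low) (use False S_bounds in fastforce)
    have sh: "mC i ?m (shift ?k (S r)) = shift ?k (mC (i - ?k) ?m (S r))"
      by (rule mC_shift_lo) (use False ps in auto)
    have sd: "shift ?k (mD (i - ?k) (S s)) = mD i (S s)" by (rule shift_mD) (use False in auto)
    have shU: "shift k (X \<union> Y) = shift k X \<union> shift k Y" for k X Y unfolding shift_def by auto
    have ag: "arity (graft r (i - ?k) s) = arity r + ?m - 1" using arity_graft[OF i2] .
    have "S (graft (Node g l r) i s) = (if g = GA then {(1, ?k + arity (graft r (i - ?k) s) + 1)} else {}) \<union> S l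
        \<union> shift ?k (S (graft r (i - ?k) s))" using False by simp
    also have "\<dots> = (if g = GA then {(1, arity l + arity r + 1 + ?m - 1)} else {}) \<union> S l
        \<union> shift ?k (mC (i - ?k) ?m (S r)) \<union> mD i (S s)"
      unfolding Node.IH(2)[OF i2] shU sd ag using ps by auto
    also have "\<dots> = mC i ?m (S (Node g l r)) \<union> mD i (S s)"
      unfolding S.simps mC_Un root lo sh by simp
    finally show ?thesis .
  qed
qed




lemma comp_R:
  assumes "1 \<le> i" "i \<le> arity t"
  shows "bnc_comp (R t) i (R s) = R (graft t i s)"
  unfolding R_def
  using comp_rep[OF assms arity_pos[of s] long_S[of t] long_S[of s]] arity_graft[OF assms, of s] S_graft[OF assms, of s]
  by (simp add: Un_assoc)

lemma mem_edges: "(a,b) \<in> edges n \<longleftrightarrow> 1 \<le> a \<and> a \<le> n \<and> b = a + 1" unfolding edges_def by auto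
lemma edges1: "edges (Suc 0) = {(1,2)}" by (auto simp: mem_edges)
lemma edges2: "edges (Suc (Suc 0)) = {(1,2),(2,3)}" by (auto simp: mem_edges)

lemma gen_R: "gen_val g = R (fgen g)"
  by (cases g) (auto simp: R_def edges2 T_bbb_def T_bub_def)

lemma eval_R: "eval t = R t"
proof (induction t)
  case Leaf then show ?case by (simp add: R_def edges1 bnc_unit_def)
next
  case (Node g l r)
  have "eval (Node g l r) = bnc_comp (bnc_comp (R (fgen g)) 2 (R r)) 1 (R l)"
    using Node gen_R by simp
  also have "bnc_comp (R (fgen g)) 2 (R r) = R (Node g Leaf r)"
    using comp_R[of 2 "fgen g" r] by simp
  also have "bnc_comp (R (Node g Leaf r)) 1 (R l) = R (Node g l r)"
    using comp_R[of 1 "Node g Leaf r" l] arity_pos[of r] by simp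
  finally show ?case .
qed

lemma R_inj: "R t = R s \<Longrightarrow> arity t = arity s \<and> S t = S s"
proof -
  assume "R t = R s"
  then have a: "arity t = arity s" and e: "edges (arity t) \<union> S t = edges (arity t) \<union> S s"
    unfolding R_def by auto
  have d: "X \<inter> edges n = {}" if "long X" for X n
    using that unfolding long_def edges_def by fastforce
  have "S t = (edges (arity t) \<union> S t) - edges (arity t)" using d[OF long_S, of t "arity t"] by blast
  also have "\<dots> = (edges (arity t) \<union> S s) - edges (arity t)" using e by simp
  also have "\<dots> = S s" using d[OF long_S, of s "arity t"] by blast
  finally show ?thesis using a by simp
qed

lemma ocong_R: "ocong t s \<Longrightarrow> R t = R s"
proof (induction rule: ocong.induct)
  case rel_w then show ?case by (simp add: R_def)
next
  case rel_a then show ?case by (simp add: R_def)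
next
  case (refl t) then show ?case by simp
next
  case (sym t s) then show ?case by simp
next
  case (trans t s u) then show ?case by simp
next
  case (comp_right t t' i s)
  then show ?case using comp_R[of i s t] comp_R[of i s t'] by simp
next
  case (comp_left t t' i s)
  then have "arity t = arity t'" using R_inj by blast
  then show ?case using comp_left comp_R[of i t s] comp_R[of i t' s] by simp
qed

lemma ocong_node_l: "ocong l l' \<Longrightarrow> ocong (Node g l r) (Node g l' r)"
  using ocong.comp_right[of l l' 1 "Node g Leaf r"] by simp

lemma ocong_node_r: "ocong r r' \<Longrightarrow> ocong (Node g l r) (Node g l r')"
  using ocong.comp_right[of r r' "arity l + 1" "Node g l Leaf"] by simp

lemma ocong_rot_step: "ocong (Node g (Node GW x y) z) (Node g x (Node GW y z))"
proof -
  have base: "ocong (Node g (Node GW Leaf Leaf) Leaf) (Node g Leaf (Node GW Leaf Leaf))"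
    using ocong.rel_w ocong.rel_a by (cases g) simp_all
  have 1: "ocong (Node g (Node GW Leaf Leaf) z) (Node g Leaf (Node GW Leaf z))"
    using ocong.comp_left[OF base, of 3 z] by simp
  have 2: "ocong (Node g (Node GW Leaf y) z) (Node g Leaf (Node GW y z))"
    using ocong.comp_left[OF 1, of 2 y] by simp
  show ?thesis
    using ocong.comp_left[OF 2, of 1 x] by simp
qed

function rot :: "ftree \<Rightarrow> ftree" where
  "rot Leaf = Leaf"
| "rot (Node g (Node GW x y) z) = rot (Node g x (Node GW y z))"
| "rot (Node g Leaf z) = Node g Leaf z"
| "rot (Node g (Node GA x y) z) = Node g (Node GA x y) z"
  by pat_completeness auto
termination
  by (relation "measure (\<lambda>t. case t of Leaf \<Rightarrow> 0 | Node g l r \<Rightarrow> size l)") auto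

lemma ocong_rot: "ocong t (rot t)"
proof (induction t rule: rot.induct)
  case (2 g x y z)
  then show ?case using ocong.trans[OF ocong_rot_step] by simp
qed (auto intro: ocong.refl)

lemma rot_shape: "rot t = Leaf \<or> (\<exists>g l r. rot t = Node g l r \<and> (\<forall>x y. l \<noteq> Node GW x y))"
  by (induction t rule: rot.induct) auto




lemma S_node_cases:
  assumes "(a,b) \<in> S (Node g l r)"
  obtains "g = GA" "a = 1" "b = arity l + arity r + 1"
  | "(a,b) \<in> S l"
  | a' b' where "(a',b') \<in> S r" "a = a' + arity l" "b = b' + arity l"
  using assms by (auto simp: shift_def split: if_splits)

lemma root_arc: "(1, arity l + arity r + 1) \<in> S (Node g l r) \<longleftrightarrow> g = GA"
proof
  assume h: "(1, arity l + arity r + 1) \<in> S (Node g l r)"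
  have p: "1 \<le> arity l" "1 \<le> arity r" by (rule arity_pos)+
  show "g = GA"
  proof (rule S_node_cases[OF h])
    assume "(1, arity l + arity r + 1) \<in> S l"
    then show ?thesis using S_bounds[of 1 "arity l + arity r + 1" l] p by auto
  next
    fix a' b' assume "(a',b') \<in> S r" "1 = a' + arity l"
    then show ?thesis using S_bounds[of a' b' r] p by auto
  qed
next
  assume "g = GA" then show "(1, arity l + arity r + 1) \<in> S (Node g l r)" by simp
qed

lemma S_l_char: "S l = {(a,b). (a,b) \<in> S (Node g l r) \<and> b \<le> arity l + 1}"
proof (rule set_eqI, rule iffI)
  fix x assume "x \<in> S l" then show "x \<in> {(a,b). (a,b) \<in> S (Node g l r) \<and> b \<le> arity l + 1}"
    using S_bounds by (cases x) auto
next
  fix x assume "x \<in> {(a,b). (a,b) \<in> S (Node g l r) \<and> b \<le> arity l + 1}"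
  then obtain a b where x: "x = (a,b)" "(a,b) \<in> S (Node g l r)" "b \<le> arity l + 1" by auto
  have p: "1 \<le> arity l" "1 \<le> arity r" by (rule arity_pos)+
  show "x \<in> S l"
  proof (rule S_node_cases[OF x(2)])
    assume "b = arity l + arity r + 1" then show ?thesis using x p by auto
  next
    assume "(a,b) \<in> S l" then show ?thesis using x by simp
  next
    fix a' b' assume "(a',b') \<in> S r" "b = b' + arity l"
    then show ?thesis using S_bounds[of a' b' r] x by auto
  qed
qed

lemma S_r_char: "S r = {(a,b). 1 \<le> a \<and> (a + arity l, b + arity l) \<in> S (Node g l r)}"
proof (rule set_eqI, rule iffI)
  fix x assume "x \<in> S r" then show "x \<in> {(a,b). 1 \<le> a \<and> (a + arity l, b + arity l) \<in> S (Node g l r)}"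
    using S_bounds by (cases x) (auto simp: shift_def)
next
  fix x assume "x \<in> {(a,b). 1 \<le> a \<and> (a + arity l, b + arity l) \<in> S (Node g l r)}"
  then obtain a b where x: "x = (a,b)" "(a + arity l, b + arity l) \<in> S (Node g l r)" "1 \<le> a" by auto
  have p: "1 \<le> arity l" "1 \<le> arity r" by (rule arity_pos)+
  show "x \<in> S r"
  proof (rule S_node_cases[OF x(2)])
    assume "a + arity l = 1" then show ?thesis using x p by auto
  next
    assume "(a + arity l, b + arity l) \<in> S l"
    then show ?thesis using S_bounds[of "a + arity l" "b + arity l" l] by auto
  next
    fix a' b' assume "(a',b') \<in> S r" "a + arity l = a' + arity l" "b + arity l = b' + arity l"
    then show ?thesis using x by simp
  qed
qed

lemma le_side:
  assumes l': "\<forall>x y. l' \<noteq> Node GW x y"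
    and ar: "arity (Node g l r) = arity (Node g' l' r')"
    and SS: "S (Node g l r) = S (Node g' l' r')"
  shows "arity l' \<le> arity l"
proof (cases l')
  case Leaf then show ?thesis using arity_pos[of l] by simp
next
  case (Node h x y)
  then have h: "h = GA" using l' by (cases h) auto
  have p: "1 \<le> arity l" "1 \<le> arity r" "1 \<le> arity r'" by (rule arity_pos)+
  have "(1, arity l' + 1) \<in> S (Node g' l' r')" using Node h by simp
  then have m: "(1, arity l' + 1) \<in> S (Node g l r)" using SS by simp
  show ?thesis
  proof (rule S_node_cases[OF m])
    assume "arity l' + 1 = arity l + arity r + 1"
    then show ?thesis using ar p by simp
  next
    assume "(1, arity l' + 1) \<in> S l" then show ?thesis using S_bounds by fastforce
  next
    fix a' b' assume "(a',b') \<in> S r" "1 = a' + arity l"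
    then show ?thesis using S_bounds[of a' b' r] p by auto
  qed
qed

lemma node_match:
  assumes l: "\<forall>x y. l \<noteq> Node GW x y" and l': "\<forall>x y. l' \<noteq> Node GW x y"
    and ar: "arity (Node g l r) = arity (Node g' l' r')"
    and SS: "S (Node g l r) = S (Node g' l' r')"
  shows "g = g' \<and> arity l = arity l' \<and> arity r = arity r' \<and> S l = S l' \<and> S r = S r'"
proof -
  have k: "arity l = arity l'" using le_side[OF l' ar SS] le_side[OF l ar[symmetric] SS[symmetric]] by simp
  have r: "arity r = arity r'" using k ar by simp
  have "g = GA \<longleftrightarrow> (1, arity l + arity r + 1) \<in> S (Node g l r)" by (rule root_arc[symmetric])
  also have "\<dots> \<longleftrightarrow> (1, arity l' + arity r' + 1) \<in> S (Node g' l' r')" using SS k r by simp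
  also have "\<dots> \<longleftrightarrow> g' = GA" by (rule root_arc)
  finally have g: "g = g'" by (cases g; cases g') auto
  have "S l = {(a,b). (a,b) \<in> S (Node g l r) \<and> b \<le> arity l + 1}" by (rule S_l_char)
  also have "\<dots> = {(a,b). (a,b) \<in> S (Node g' l' r') \<and> b \<le> arity l' + 1}" by (simp only: SS k)
  also have "\<dots> = S l'" by (rule S_l_char[symmetric])
  finally have "S l = S l'" .
  moreover have "S r = S r'"
  proof -
    have "S r = {(a,b). 1 \<le> a \<and> (a + arity l, b + arity l) \<in> S (Node g l r)}" by (rule S_r_char)
    also have "\<dots> = {(a,b). 1 \<le> a \<and> (a + arity l', b + arity l') \<in> S (Node g' l' r')}" by (simp only: SS k)
    also have "\<dots> = S r'" by (rule S_r_char[symmetric])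
    finally show ?thesis .
  qed
  ultimately show ?thesis using g k r by simp
qed

lemma key: "arity t = n \<Longrightarrow> arity s = n \<Longrightarrow> S t = S s \<Longrightarrow> ocong t s"
proof (induction n arbitrary: t s rule: less_induct)
  case (less n)
  have rt: "ocong t (rot t)" "ocong s (rot s)" by (rule ocong_rot)+
  have "R (rot t) = R t" "R (rot s) = R s" using ocong_R[OF rt(1)] ocong_R[OF rt(2)] by simp_all
  then have "arity (rot t) = arity t \<and> S (rot t) = S t" "arity (rot s) = arity s \<and> S (rot s) = S s"
    using R_inj by blast+
  then have at: "arity (rot t) = n" "S (rot t) = S t" "arity (rot s) = n" "S (rot s) = S s"
    using less.prems by simp_all
  have fin: "ocong t s" if "ocong (rot t) (rot s)"
    using ocong.trans[OF rt(1) ocong.trans[OF that ocong.sym[OF rt(2)]]] .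
  have ar2: "2 \<le> arity (Node g l r)" for g l r using arity_pos[of l] arity_pos[of r] by simp
  show ?case
  proof (cases "rot t = Leaf")
    case True
    then have "n = 1" using at by simp
    have "rot s = Leaf"
    proof (rule ccontr)
      assume "rot s \<noteq> Leaf"
      then obtain g l r where "rot s = Node g l r" using rot_shape[of s] by blast
      then show False using ar2[of g l r] at \<open>n = 1\<close> by simp
    qed
    then show ?thesis using True fin ocong.refl by simp
  next
    case False
    then obtain g l r where t: "rot t = Node g l r" "\<forall>x y. l \<noteq> Node GW x y" using rot_shape[of t] by blast
    have "n = arity (Node g l r)" using at(1) t(1) by simp
    then have "n \<ge> 2" using ar2[of g l r] by simp
    then have "rot s \<noteq> Leaf" using at(3) by auto
    then obtain g' l' r' where s: "rot s = Node g' l' r'" "\<forall>x y. l' \<noteq> Node GW x y" using rot_shape[of s] by blast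
    have M: "g = g' \<and> arity l = arity l' \<and> arity r = arity r' \<and> S l = S l' \<and> S r = S r'"
    proof (rule node_match[OF t(2) s(2)])
      show "arity (Node g l r) = arity (Node g' l' r')" using at(1,3) t(1) s(1) by metis
      show "S (Node g l r) = S (Node g' l' r')" using at(2,4) t(1) s(1) less.prems(3) by metis
    qed
    have lt: "arity l < n" "arity r < n" using at t arity_pos[of l] arity_pos[of r] by auto
    have cl: "ocong l l'" using less.IH[OF lt(1) HOL.refl] M by simp
    have cr: "ocong r r'" using less.IH[OF lt(2) HOL.refl] M by simp
    have "ocong (Node g l r) (Node g' l' r')"
      using ocong.trans[OF ocong_node_l[OF cl] ocong_node_r[OF cr]] M by simp
    then show ?thesis using fin t s by simp
  qed
qed

lemma size_comp: "bnc_size (bnc_comp C i D) = bnc_size C + bnc_size D - 1"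
  unfolding bnc_comp_def Let_def by simp





lemma gv_mem: "gen_val g \<in> gen_suboperad {T_bbb, T_bub}"
  by (cases g) (simp_all add: gen_suboperad.gen)

lemma gv_size: "bnc_size (gen_val g) = 2"
  by (cases g) (simp_all add: T_bbb_def T_bub_def)

lemma eval_in: "eval t \<in> gen_suboperad {T_bbb, T_bub}"
proof (induction t)
  case Leaf then show ?case by (simp add: gen_suboperad.unit)
next
  case (Node g l r)
  have c1: "bnc_comp (gen_val g) 2 (eval r) \<in> gen_suboperad {T_bbb, T_bub}"
    by (rule gen_suboperad.comp[OF gv_mem Node.IH(2)]) (simp_all add: gv_size)
  have "1 \<le> bnc_size (bnc_comp (gen_val g) 2 (eval r))" unfolding size_comp gv_size by simp
  then have c2: "bnc_comp (bnc_comp (gen_val g) 2 (eval r)) 1 (eval l) \<in> gen_suboperad {T_bbb, T_bub}"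
    by (rule gen_suboperad.comp[OF c1 Node.IH(1), rotated]) simp
  then show ?case by simp
qed

lemma sz: "bnc_size (eval t) = arity t" by (simp add: eval_R R_def)

lemma gr: "1 \<le> i \<Longrightarrow> i \<le> arity t \<Longrightarrow> eval (graft t i s) = bnc_comp (eval t) i (eval s)"
  using comp_R[of i t s] by (simp add: eval_R)

lemma in_range: "x \<in> gen_suboperad {T_bbb, T_bub} \<Longrightarrow> x \<in> range eval"
proof (induction rule: gen_suboperad.induct)
  case unit
  have "bnc_unit = eval Leaf" by simp
  then show ?case by (rule image_eqI) simp
next
  case (gen g)
  then have "g = T_bbb \<or> g = T_bub" by simp
  moreover have "T_bbb = eval (fgen GA)" using gen_R[of GA] by (simp add: eval_R)
  moreover have "T_bub = eval (fgen GW)" using gen_R[of GW] by (simp add: eval_R)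
  ultimately show ?case by (metis rangeI)
next
  case (comp x y i)
  obtain t where t: "x = eval t" using comp.IH(1) by blast
  obtain s where s: "y = eval s" using comp.IH(2) by blast
  have "i \<le> arity t" using comp.hyps(4) t sz by simp
  then have "bnc_comp x i y = eval (graft t i s)" using gr[of i t s] comp.hyps(3) t s by simp
  then show ?case by (rule image_eqI) simp
qed



theorem theorem3p27:
  shows "(\<forall>t. bnc_size (eval t) = arity t)
       \<and> (\<forall>t i s. 1 \<le> i \<and> i \<le> arity t \<longrightarrow> eval (graft t i s) = bnc_comp (eval t) i (eval s))
       \<and> range eval = gen_suboperad {T_bbb, T_bub}
       \<and> (\<forall>t s. eval t = eval s \<longleftrightarrow> ocong t s)"
proof (intro conjI allI impI)
  show "bnc_size (eval t) = arity t" for t by (rule sz)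
  show "eval (graft t i s) = bnc_comp (eval t) i (eval s)" if "1 \<le> i \<and> i \<le> arity t" for t i s
    using that gr by blast
  show "range eval = gen_suboperad {T_bbb, T_bub}"
  proof
    show "range eval \<subseteq> gen_suboperad {T_bbb, T_bub}" using eval_in by blast
    show "gen_suboperad {T_bbb, T_bub} \<subseteq> range eval" using in_range by blast
  qed
  show "eval t = eval s \<longleftrightarrow> ocong t s" for t s
  proof
    assume "eval t = eval s"
    then have "R t = R s" by (simp only: eval_R)
    then have "arity t = arity s \<and> S t = S s" by (rule R_inj)
    then show "ocong t s" by (intro key[OF HOL.refl]) simp_all
  next
    assume "ocong t s"
    then have "R t = R s" by (rule ocong_R)
    then show "eval t = eval s" by (simp only: eval_R)
  qed
qed

end
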